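(* For every $n\equiv 1 \pmod{16}$ with $n\geq 17$, there exists an almost 2-perfect 8-cycle system of order $n$.
   Context: An 8-cycle system of order $n$ is a collection of pairwise edge-disjoint 8-cycles partitioning the edge set of $K_n$. For an 8-cycle $C$, an inside 8-cycle of $C$ is an 8-cycle on the same vertex set as $C$ sharing no edge with $C$. An 8-cycle system $\mathcal{C}$ is almost 2-perfect if one can choose, for each $C\in\mathcal{C}$, an inside 8-cycle $C'$ of $C$ so that the chosen cycles again form an 8-cycle system of order $n$. *)

theory Defs
  imports Main
begin

definition edges_Kn :: "nat \<Rightarrow> nat set set" where
  "edges_Kn n = {e. \<exists>u v. u < n \<and> v < n \<and> u \<noteq> v \<and> e = {u, v}}"

definition cyc_edges :: "nat list \<Rightarrow> nat set set" where
  "cyc_edges vs = {{vs ! i, vs ! ((i + 1) mod length vs)} | i. i < length vs}"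

definition is_8cycle :: "nat set set \<Rightarrow> bool" where
  "is_8cycle C \<longleftrightarrow> (\<exists>vs. length vs = 8 \<and> distinct vs \<and> C = cyc_edges vs)"

definition cyc_verts :: "nat set set \<Rightarrow> nat set" where
  "cyc_verts C = \<Union>C"

definition is_8cycle_system :: "nat \<Rightarrow> nat set set set \<Rightarrow> bool" where
  "is_8cycle_system n \<C> \<longleftrightarrow>
     (\<forall>C\<in>\<C>. is_8cycle C) \<and>
     (\<forall>C\<in>\<C>. \<forall>D\<in>\<C>. C \<noteq> D \<longrightarrow> C \<inter> D = {}) \<and>
     \<Union>\<C> = edges_Kn n"

definition inside_8cycle :: "nat set set \<Rightarrow> nat set set \<Rightarrow> bool" where
  "inside_8cycle C C' \<longleftrightarrow> is_8cycle C' \<and> cyc_verts C' = cyc_verts C \<and> C \<inter> C' = {}"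

definition almost_2perfect :: "nat \<Rightarrow> nat set set set \<Rightarrow> bool" where
  "almost_2perfect n \<C> \<longleftrightarrow>
     (\<exists>f. (\<forall>C\<in>\<C>. inside_8cycle C (f C)) \<and>
          inj_on f \<C> \<and> is_8cycle_system n (f ` \<C>))"

end

theory Submission
  imports Defs
begin


lemma mem_cyc_edges: "e \<in> cyc_edges vs \<longleftrightarrow> (\<exists>i<length vs. e = {vs!i, vs!((i+1) mod length vs)})"
  unfolding cyc_edges_def by auto

lemma suc_mod_less[simp]: "i < length vs \<Longrightarrow> Suc i mod length vs < length vs"
  by (rule mod_less_divisor) auto

lemma cyc_edges_map: "cyc_edges (map f vs) = (\<lambda>e. f ` e) ` cyc_edges vs"
proof (intro equalityI subsetI)
  fix e assume "e \<in> cyc_edges (map f vs)"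
  then obtain i where i: "i < length vs" "e = {f (vs!i), f (vs!(Suc i mod length vs))}"
    by (auto simp: mem_cyc_edges)
  then have "{vs!i, vs!(Suc i mod length vs)} \<in> cyc_edges vs" by (auto simp: mem_cyc_edges)
  moreover have "e = f ` {vs!i, vs!(Suc i mod length vs)}" using i by simp
  ultimately show "e \<in> (\<lambda>e. f ` e) ` cyc_edges vs" by blast
next
  fix e assume "e \<in> (\<lambda>e. f ` e) ` cyc_edges vs"
  then obtain i where i: "i < length vs" "e = f ` {vs!i, vs!(Suc i mod length vs)}"
    by (auto simp: mem_cyc_edges)
  then show "e \<in> cyc_edges (map f vs)" unfolding mem_cyc_edges
    by (intro exI[of _ i]) auto
qed

lemma Union_cyc_edges: "\<Union>(cyc_edges vs) = set vs"
proof
  have m: "i < length vs \<Longrightarrow> Suc i mod length vs < length vs" for i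
    by (rule mod_less_divisor) auto
  show "\<Union>(cyc_edges vs) \<subseteq> set vs"
    by (auto simp: mem_cyc_edges m)
next
  show "set vs \<subseteq> \<Union>(cyc_edges vs)"
  proof
    fix v assume "v \<in> set vs"
    then obtain i where "i < length vs" "v = vs!i" by (auto simp: in_set_conv_nth)
    then have "{vs!i, vs!(Suc i mod length vs)} \<in> cyc_edges vs" by (auto simp: mem_cyc_edges)
    then show "v \<in> \<Union>(cyc_edges vs)" using \<open>v = vs!i\<close> by blast
  qed
qed

lemma is_8cycle_map:
  assumes "length vs = 8" "distinct vs" "inj_on f (set vs)"
  shows "is_8cycle (cyc_edges (map f vs))"
  unfolding is_8cycle_def using assms by (intro exI[of _ "map f vs"]) (auto simp: distinct_map)

lemma cyc_edges_sub_Kn: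
  assumes "length vs \<ge> 2" "distinct vs" "inj_on f (set vs)" "f ` set vs \<subseteq> {..<n}"
  shows "cyc_edges (map f vs) \<subseteq> edges_Kn n"
proof
  fix e assume "e \<in> cyc_edges (map f vs)"
  then obtain i where i: "i < length vs" "e = {f (vs!i), f (vs!((i+1) mod length vs))}"
    by (auto simp: mem_cyc_edges)
  define j where "j = (i+1) mod length vs"
  have j1: "j < length vs" using i unfolding j_def by simp
  have j2: "j \<noteq> i"
  proof
    assume "j = i"
    then have "Suc i mod length vs = i" unfolding j_def by simp
    then show False
    proof (cases "Suc i < length vs")
      case True then show ?thesis using \<open>Suc i mod length vs = i\<close> by simp
    next
      case False
      then have "Suc i = length vs" using i(1) by simp
      then show ?thesis using \<open>Suc i mod length vs = i\<close> assms(1) by simp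
    qed
  qed
  note j = j1 j2
  have "vs!i \<noteq> vs!j" using assms(2) i j by (simp add: nth_eq_iff_index_eq)
  hence "f (vs!i) \<noteq> f (vs!j)" using assms(3) i j by (meson inj_on_contraD nth_mem)
  moreover have "f (vs!i) < n" "f (vs!j) < n" using assms(4) i(1) j(1) nth_mem by blast+
  ultimately show "e \<in> edges_Kn n" using i unfolding edges_Kn_def j_def by blast
qed

lemma inside_map:
  assumes "length vs = 8" "distinct vs" "length ws = 8" "distinct ws" "set ws = set vs"
    "inj_on f (set vs)" "cyc_edges vs \<inter> cyc_edges ws = {}"
  shows "inside_8cycle (cyc_edges (map f vs)) (cyc_edges (map f ws))"
proof -
  have c: "is_8cycle (cyc_edges (map f ws))" using assms by (intro is_8cycle_map) auto
  have v: "cyc_verts (cyc_edges (map f ws)) = cyc_verts (cyc_edges (map f vs))"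
    unfolding cyc_verts_def Union_cyc_edges using assms by simp
  have sub: "cyc_edges vs \<subseteq> Pow (set vs)" "cyc_edges ws \<subseteq> Pow (set vs)"
    using Union_cyc_edges[of vs] Union_cyc_edges[of ws] assms(5) by auto
  have inj: "inj_on (image f) (Pow (set vs))" using assms(6) by (rule inj_on_image_Pow)
  have "cyc_edges (map f vs) \<inter> cyc_edges (map f ws) = image f ` (cyc_edges vs \<inter> cyc_edges ws)"
    unfolding cyc_edges_map using inj_on_image_Int[OF inj sub] by simp
  then show ?thesis unfolding inside_8cycle_def using c v assms(7) by simp
qed

lemma cyc_edges_ne: assumes "length vs > 0" shows "cyc_edges vs \<noteq> {}"
proof -
  have "{vs!0, vs!(Suc 0 mod length vs)} \<in> cyc_edges vs" unfolding mem_cyc_edges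
    using assms by (intro exI[of _ 0]) simp
  then show ?thesis by blast
qed

lemma is_8cycle_ne: "is_8cycle C \<Longrightarrow> C \<noteq> {}"
  unfolding is_8cycle_def using cyc_edges_ne by (metis zero_less_numeral)

lemma union_helper:
  assumes "\<forall>i\<in>I. A i \<subseteq> E" "\<forall>e\<in>E. \<exists>!i. i \<in> I \<and> e \<in> A i"
  shows "\<Union> (A ` I) = E"
proof
  show "\<Union> (A ` I) \<subseteq> E" using assms(1) by blast
  show "E \<subseteq> \<Union> (A ` I)"
  proof
    fix e assume "e \<in> E"
    then obtain i where "i \<in> I" "e \<in> A i" using assms(2) by metis
    then show "e \<in> \<Union> (A ` I)" by blast
  qed
qed

lemma disj_helper:
  assumes "\<forall>i\<in>I. A i \<subseteq> E" "\<forall>e\<in>E. \<exists>!i. i \<in> I \<and> e \<in> A i"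
    "C \<in> A ` I" "D \<in> A ` I" "C \<noteq> D"
  shows "C \<inter> D = {}"
proof (rule ccontr)
  assume "C \<inter> D \<noteq> {}"
  then obtain e where e: "e \<in> C" "e \<in> D" by blast
  obtain i j where ij: "i \<in> I" "j \<in> I" "C = A i" "D = A j" using assms by blast
  have "e \<in> E" using assms(1) ij e by blast
  then have "i = j" using assms(2) ij e by metis
  then show False using ij assms(5) by simp
qed

lemma framework:
  assumes cyc: "\<forall>i\<in>I. is_8cycle (A i) \<and> inside_8cycle (A i) (B i)"
    and subA: "\<forall>i\<in>I. A i \<subseteq> edges_Kn n" and subB: "\<forall>i\<in>I. B i \<subseteq> edges_Kn n"
    and uA: "\<forall>e\<in>edges_Kn n. \<exists>!i. i \<in> I \<and> e \<in> A i"
    and uB: "\<forall>e\<in>edges_Kn n. \<exists>!i. i \<in> I \<and> e \<in> B i"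
  shows "\<exists>\<C>. is_8cycle_system n \<C> \<and> almost_2perfect n \<C>"
proof -
  have neA: "\<forall>i\<in>I. A i \<noteq> {}" using cyc is_8cycle_ne by blast
  have neB: "\<forall>i\<in>I. B i \<noteq> {}" using cyc is_8cycle_ne unfolding inside_8cycle_def by blast
  have injA: "i \<in> I \<Longrightarrow> j \<in> I \<Longrightarrow> A i = A j \<Longrightarrow> i = j" for i j
  proof -
    assume a: "i \<in> I" "j \<in> I" "A i = A j"
    then obtain e where e: "e \<in> A i" using neA by blast
    then have "e \<in> edges_Kn n" using subA a by blast
    then show "i = j" using uA a e by metis
  qed
  have injB: "i \<in> I \<Longrightarrow> j \<in> I \<Longrightarrow> B i = B j \<Longrightarrow> i = j" for i j
  proof -
    assume a: "i \<in> I" "j \<in> I" "B i = B j"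
    then obtain e where e: "e \<in> B i" using neB by blast
    then have "e \<in> edges_Kn n" using subB a by blast
    then show "i = j" using uB a e by metis
  qed
  have sysA: "is_8cycle_system n (A ` I)"
    unfolding is_8cycle_system_def
  proof (intro conjI)
    show "\<forall>C\<in>A ` I. is_8cycle C" using cyc by blast
    show "\<forall>C\<in>A ` I. \<forall>D\<in>A ` I. C \<noteq> D \<longrightarrow> C \<inter> D = {}"
      by (intro ballI impI) (rule disj_helper[OF subA uA])
    show "\<Union> (A ` I) = edges_Kn n" by (rule union_helper[OF subA uA])
  qed
  have sysB: "is_8cycle_system n (B ` I)"
    unfolding is_8cycle_system_def
  proof (intro conjI)
    show "\<forall>C\<in>B ` I. is_8cycle C" using cyc unfolding inside_8cycle_def by blast
    show "\<forall>C\<in>B ` I. \<forall>D\<in>B ` I. C \<noteq> D \<longrightarrow> C \<inter> D = {}"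
      by (intro ballI impI) (rule disj_helper[OF subB uB])
    show "\<Union> (B ` I) = edges_Kn n" by (rule union_helper[OF subB uB])
  qed
  define f where "f C = B (SOME i. i \<in> I \<and> A i = C)" for C
  have fA: "i \<in> I \<Longrightarrow> f (A i) = B i" for i
  proof -
    assume i: "i \<in> I"
    have "(SOME j. j \<in> I \<and> A j = A i) = i"
      by (rule some_equality) (use i injA in auto)
    then show ?thesis unfolding f_def by simp
  qed
  have img: "f ` (A ` I) = B ` I" using fA by (auto simp: image_iff)
  have ap: "almost_2perfect n (A ` I)"
    unfolding almost_2perfect_def
  proof (intro exI[of _ f] conjI)
    show "\<forall>C\<in>A ` I. inside_8cycle C (f C)"
    proof
      fix C assume "C \<in> A ` I"
      then obtain i where "i \<in> I" "C = A i" by blast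
      then show "inside_8cycle C (f C)" using cyc fA by simp
    qed
    show "inj_on f (A ` I)" unfolding inj_on_def
    proof (intro ballI impI)
      fix C D assume "C \<in> A ` I" "D \<in> A ` I" "f C = f D"
      then obtain i j where ij: "i \<in> I" "j \<in> I" "C = A i" "D = A j" "f C = f D" by blast
      then have "B i = B j" using fA by simp
      then have "i = j" using injB ij by blast
      then show "C = D" using ij by simp
    qed
    show "is_8cycle_system n (f ` A ` I)" using img sysB by simp
  qed
  show ?thesis by (rule exI[of _ "A ` I"], rule conjI[OF sysA ap])
qed



definition Lc :: "nat list \<Rightarrow> nat \<Rightarrow> nat list" where
  "Lc b c = map (\<lambda>x. (x + c) mod 17) b"

definition fw :: "nat list \<Rightarrow> nat \<Rightarrow> nat" where
  "fw b i = (b!((i+1) mod 8) + 17 - b!i) mod 17"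
definition bw :: "nat list \<Rightarrow> nat \<Rightarrow> nat" where
  "bw b i = (b!i + 17 - b!((i+1) mod 8)) mod 17"

lemma Lc_edge:
  assumes "length b = 8"
  shows "e \<in> cyc_edges (Lc b c) \<longleftrightarrow>
    (\<exists>i<8. e = {(b!i + c) mod 17, (b!((i+1) mod 8) + c) mod 17})"
proof -
  have L: "length (Lc b c) = 8" using assms by (simp add: Lc_def)
  have N: "i < 8 \<Longrightarrow> Lc b c ! i = (b!i + c) mod 17" for i using assms by (simp add: Lc_def)
  have M: "i < 8 \<Longrightarrow> (i+1) mod 8 < (8::nat)" for i :: nat by simp
  show ?thesis unfolding mem_cyc_edges L
  proof
    assume "\<exists>i<8. e = {Lc b c ! i, Lc b c ! ((i+1) mod 8)}"
    then obtain i where "i < 8" "e = {Lc b c ! i, Lc b c ! ((i+1) mod 8)}" by blast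
    then show "\<exists>i<8. e = {(b!i + c) mod 17, (b!((i+1) mod 8) + c) mod 17}"
      using N[of i] N[of "(i+1) mod 8"] M[of i] by metis
  next
    assume "\<exists>i<8. e = {(b!i + c) mod 17, (b!((i+1) mod 8) + c) mod 17}"
    then obtain i where "i < 8" "e = {(b!i + c) mod 17, (b!((i+1) mod 8) + c) mod 17}" by blast
    then show "\<exists>i<8. e = {Lc b c ! i, Lc b c ! ((i+1) mod 8)}"
      using N[of i] N[of "(i+1) mod 8"] M[of i] by metis
  qed
qed

lemma m34: "(a::nat) < 34 \<Longrightarrow> a mod 17 = (if a < 17 then a else a - 17)"
  by (simp add: mod_if le_mod_geq)

lemma exist_aux1:
  fixes p q x y :: nat
  assumes "p < 17" "q < 17" "x < 17" "y < 17" "(q + 17 - p) mod 17 = (y + 17 - x) mod 17"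
  shows "(p + (x + 17 - p) mod 17) mod 17 = x \<and> (q + (x + 17 - p) mod 17) mod 17 = y"
proof -
  have e: "(q + 17 - p) mod 17 = (y + 17 - x) mod 17" by fact
  have "q + 17 - p < 34" "y + 17 - x < 34" "x + 17 - p < 34" using assms by auto
  then have e2: "(if q + 17 - p < 17 then q + 17 - p else q + 17 - p - 17) = (if y + 17 - x < 17 then y + 17 - x else y + 17 - x - 17)"
    using e by (simp only: m34)
  have c: "(x + 17 - p) mod 17 = (if x + 17 - p < 17 then x + 17 - p else x + 17 - p - 17)"
    using assms by (intro m34) auto
  show ?thesis unfolding c using assms e2 by (auto simp: m34 split: if_splits)
qed

lemma uniq_aux1:
  fixes p q p' q' c c' :: nat
  assumes "p < 17" "q < 17" "p' < 17" "q' < 17" "c < 17" "c' < 17"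
    "(p + c) mod 17 = (p' + c') mod 17" "(q + c) mod 17 = (q' + c') mod 17"
  shows "(q + 17 - p) mod 17 = (q' + 17 - p') mod 17"
proof -
  have "p + c < 34" "p' + c' < 34" "q + c < 34" "q' + c' < 34" "q + 17 - p < 34" "q' + 17 - p' < 34"
    using assms by auto
  then show ?thesis using assms apply (simp only: m34) apply (auto split: if_splits) by arith+
qed

lemma uniq_aux2:
  fixes p c c' :: nat
  assumes "p < 17" "(p + c) mod 17 = (p + c') mod 17" "c < 17" "c' < 17"
  shows "c = c'"
proof -
  have "p + c < 34" "p + c' < 34" using assms by auto
  then show ?thesis using assms apply (simp only: m34) by (auto split: if_splits)
qed

lemma Lc_unique:
  assumes len: "length b = 8" and H1: "\<forall>i<8. b!i < 17"
    and H2a: "inj_on (fw b) {..<8}"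
    and H2b: "fw b ` {..<8} \<inter> bw b ` {..<8} = {}"
    and H3a: "{0<..<17} \<subseteq> fw b ` {..<8} \<union> bw b ` {..<8}"
    and x: "x < 17" "y < 17" "x \<noteq> y"
  shows "\<exists>!c. c < 17 \<and> {x,y} \<in> cyc_edges (Lc b c)"
proof -
  have H2: "\<forall>i<8. \<forall>j<8. (fw b i = fw b j \<longrightarrow> i = j) \<and> fw b i \<noteq> bw b j"
  proof (intro allI impI conjI)
    fix i j :: nat assume ij: "i < 8" "j < 8"
    show "fw b i = fw b j \<Longrightarrow> i = j" using H2a ij by (simp add: inj_on_def)
    have i8: "i \<in> {..<8}" and j8: "j \<in> {..<8}" using ij by (simp_all only: lessThan_iff)
    have f1: "fw b i \<in> fw b ` {..<8}" using i8 by (rule imageI)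
    have b1: "bw b j \<in> bw b ` {..<8}" using j8 by (rule imageI)
    show "fw b i \<noteq> bw b j"
    proof
      assume eq: "fw b i = bw b j"
      have "fw b i \<in> fw b ` {..<8} \<inter> bw b ` {..<8}" using f1 b1 eq by (metis IntI)
      then show False using H2b by (metis empty_iff)
    qed
  qed
  have H3: "\<forall>D<17. 0 < D \<longrightarrow> (\<exists>i<8. fw b i = D \<or> bw b i = D)"
  proof (intro allI impI)
    fix D :: nat assume "D < 17" "0 < D"
    then have "D \<in> {0<..<17}" by simp
    then have "D \<in> fw b ` {..<8} \<union> bw b ` {..<8}" using H3a by (rule subsetD[rotated])
    then show "\<exists>i<8. fw b i = D \<or> bw b i = D" by blast
  qed
  show ?thesis
  proof (rule ex_ex1I)
  define D where "D = (y + 17 - x) mod 17"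
  have "y + 17 - x < 34" using x by auto
  then have "D = (if y + 17 - x < 17 then y + 17 - x else y + 17 - x - 17)" unfolding D_def by (rule m34)
  then have "0 < D \<and> D < 17" using x by auto
  then obtain i where i: "i < 8" "fw b i = D \<or> bw b i = D" using H3 by blast
  define p where "p = b!i"
  define q where "q = b!((i+1) mod 8)"
  have pq: "p < 17" "q < 17" using H1 i(1) unfolding p_def q_def by auto
  show "\<exists>c. c < 17 \<and> {x,y} \<in> cyc_edges (Lc b c)"
  proof (cases "fw b i = D")
    case True
    then have "(q + 17 - p) mod 17 = (y + 17 - x) mod 17" unfolding fw_def p_def q_def D_def by simp
    from exist_aux1[OF pq x(1,2) this] have
      "(p + (x + 17 - p) mod 17) mod 17 = x" "(q + (x + 17 - p) mod 17) mod 17 = y" by auto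
    then have "{x,y} \<in> cyc_edges (Lc b ((x + 17 - p) mod 17))" unfolding Lc_edge[OF len]
      using i(1) unfolding p_def q_def by metis
    then show ?thesis by (intro exI[of _ "(x + 17 - p) mod 17"]) simp
  next
    case False
    then have "bw b i = D" using i by simp
    then have "(p + 17 - q) mod 17 = (y + 17 - x) mod 17" unfolding bw_def p_def q_def D_def by simp
    from exist_aux1[OF pq(2,1) x(1,2) this] have
      "(q + (x + 17 - q) mod 17) mod 17 = x" "(p + (x + 17 - q) mod 17) mod 17 = y" by auto
    then have "{y,x} \<in> cyc_edges (Lc b ((x + 17 - q) mod 17))" unfolding Lc_edge[OF len]
      using i(1) unfolding p_def q_def by metis
    then show ?thesis by (intro exI[of _ "(x + 17 - q) mod 17"]) (simp add: insert_commute)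
  qed
next
  fix c c' assume c: "c < 17 \<and> {x,y} \<in> cyc_edges (Lc b c)" and c': "c' < 17 \<and> {x,y} \<in> cyc_edges (Lc b c')"
  then obtain i j where ij: "i < 8" "j < 8"
    "{x,y} = {(b!i + c) mod 17, (b!((i+1) mod 8) + c) mod 17}"
    "{x,y} = {(b!j + c') mod 17, (b!((j+1) mod 8) + c') mod 17}"
    unfolding Lc_edge[OF len] by blast
  have bnd: "b!i < 17" "b!((i+1) mod 8) < 17" "b!j < 17" "b!((j+1) mod 8) < 17"
    using H1 ij(1,2) by auto
  have cc: "c < 17" "c' < 17" using c c' by auto
  from ij(3,4) have
    "((b!i + c) mod 17 = (b!j + c') mod 17 \<and> (b!((i+1) mod 8) + c) mod 17 = (b!((j+1) mod 8) + c') mod 17) \<or>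
     ((b!i + c) mod 17 = (b!((j+1) mod 8) + c') mod 17 \<and> (b!((i+1) mod 8) + c) mod 17 = (b!j + c') mod 17)"
    by (metis doubleton_eq_iff)
  then show "c = c'"
  proof
    assume a: "(b!i + c) mod 17 = (b!j + c') mod 17 \<and> (b!((i+1) mod 8) + c) mod 17 = (b!((j+1) mod 8) + c') mod 17"
    have "fw b i = fw b j" unfolding fw_def
      using uniq_aux1[OF bnd(1,2,3,4) cc] a by simp
    then have "i = j" using H2 ij(1,2) by blast
    then show "c = c'" using uniq_aux2[OF bnd(1) _ cc] a by simp
  next
    assume a: "(b!i + c) mod 17 = (b!((j+1) mod 8) + c') mod 17 \<and> (b!((i+1) mod 8) + c) mod 17 = (b!j + c') mod 17"
    have "fw b i = bw b j" unfolding fw_def bw_def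
      using uniq_aux1[OF bnd(1,2,4,3) cc] a by simp
    then show "c = c'" using H2 ij(1,2) by blast
  qed
qed
qed


definition base :: "nat list" where "base = [0,1,3,6,2,7,16,10]"
definition base' :: "nat list" where "base' = [0,6,1,16,3,2,10,7]"

lemma lt8: "{..<8::nat} = {0,1,2,3,4,5,6,7}" by auto

lemma fw_base: "fw base 0 = 1" "fw base 1 = 2" "fw base 2 = 3" "fw base 3 = 13"
   "fw base 4 = 5" "fw base 5 = 9" "fw base 6 = 11" "fw base 7 = 7"
  by (simp_all add: fw_def base_def)
lemma bw_base: "bw base 0 = 16" "bw base 1 = 15" "bw base 2 = 14" "bw base 3 = 4"
   "bw base 4 = 12" "bw base 5 = 8" "bw base 6 = 6" "bw base 7 = 10"
  by (simp_all add: bw_def base_def)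

lemma base_S: "fw base (Suc 0) = 2" "bw base (Suc 0) = 15"
  using fw_base(2) bw_base(2) by simp_all

lemma base_H: "length base = 8" "distinct base" "\<forall>i<8. base!i < 17"
  "inj_on (fw base) {..<8}" "fw base ` {..<8} \<inter> bw base ` {..<8} = {}"
  "{0<..<17} \<subseteq> fw base ` {..<8} \<union> bw base ` {..<8}"
  subgoal by (simp add: base_def)
  subgoal by (simp add: base_def)
  subgoal by (simp add: base_def numeral_eq_Suc All_less_Suc)
  subgoal unfolding lt8 by (simp add: fw_base bw_base base_S)
  subgoal unfolding lt8 by (simp add: fw_base bw_base base_S)
  subgoal unfolding lt8 apply (auto simp add: fw_base bw_base base_S) by presburger
  done
lemma fw_base': "fw base' 0 = 6" "fw base' 1 = 12" "fw base' 2 = 15" "fw base' 3 = 4"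
   "fw base' 4 = 16" "fw base' 5 = 8" "fw base' 6 = 14" "fw base' 7 = 10"
  by (simp_all add: fw_def base'_def)
lemma bw_base': "bw base' 0 = 11" "bw base' 1 = 5" "bw base' 2 = 2" "bw base' 3 = 13"
   "bw base' 4 = 1" "bw base' 5 = 9" "bw base' 6 = 3" "bw base' 7 = 7"
  by (simp_all add: bw_def base'_def)
lemma base'_S: "fw base' (Suc 0) = 12" "bw base' (Suc 0) = 5"
  using fw_base'(2) bw_base'(2) by simp_all

lemma base'_H: "length base' = 8" "distinct base'" "\<forall>i<8. base'!i < 17"
  "inj_on (fw base') {..<8}" "fw base' ` {..<8} \<inter> bw base' ` {..<8} = {}"
  "{0<..<17} \<subseteq> fw base' ` {..<8} \<union> bw base' ` {..<8}"
  subgoal by (simp add: base'_def)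
  subgoal by (simp add: base'_def)
  subgoal by (simp add: base'_def numeral_eq_Suc All_less_Suc)
  subgoal unfolding lt8 by (simp add: fw_base' bw_base' base'_S)
  subgoal unfolding lt8 by (simp add: fw_base' bw_base' base'_S)
  subgoal unfolding lt8 apply (auto simp add: fw_base' bw_base' base'_S) by presburger
  done

lemma cyc8: "cyc_edges [a0,a1,a2,a3,a4,a5,a6,a7] =
  {{a0,a1},{a1,a2},{a2,a3},{a3,a4},{a4,a5},{a5,a6},{a6,a7},{a7,a0}}"
proof -
  have "cyc_edges [a0,a1,a2,a3,a4,a5,a6,a7] = (\<lambda>i. {[a0,a1,a2,a3,a4,a5,a6,a7]!i, [a0,a1,a2,a3,a4,a5,a6,a7]!((i+1) mod 8)}) ` {..<8}"
    unfolding cyc_edges_def by auto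
  also have "\<dots> = {{a0,a1},{a1,a2},{a2,a3},{a3,a4},{a4,a5},{a5,a6},{a6,a7},{a7,a0}}"
    unfolding lt8 by simp
  finally show ?thesis .
qed

lemma base_inside: "set base' = set base" "cyc_edges base \<inter> cyc_edges base' = {}"
  subgoal unfolding base_def base'_def by (simp add: insert_commute)
  subgoal unfolding base_def base'_def cyc8 by (simp add: doubleton_eq_iff)
  done


definition phi :: "nat \<Rightarrow> nat \<Rightarrow> nat \<Rightarrow> nat" where
  "phi k g x = (if x < 16 then 16*g + x else 16*k)"
definition psi :: "nat \<Rightarrow> nat \<Rightarrow> nat \<Rightarrow> nat \<Rightarrow> nat \<Rightarrow> nat" where
  "psi g h a b x = (if x < 4 then 16*g + 4*a + x else 16*h + 4*b + (x - 4))"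

lemma phi_lt: "g < k \<Longrightarrow> x < 17 \<Longrightarrow> phi k g x < 16*k+1"
  unfolding phi_def by auto

lemma phi_inj: "g < k \<Longrightarrow> inj_on (phi k g) {..<17}"
  unfolding phi_def inj_on_def by auto

lemma phi_cases: "g < k \<Longrightarrow> x < 17 \<Longrightarrow>
   (phi k g x = 16*k \<and> x = 16) \<or> (x < 16 \<and> phi k g x < 16*k \<and> phi k g x div 16 = g)"
  unfolding phi_def by auto

lemma dm: "(r::nat) < m \<Longrightarrow> (m*g + r) div m = g \<and> (m*g + r) mod m = r"
  by (simp add: add.commute)

lemma psi_X: "g < h \<Longrightarrow> h < k \<Longrightarrow> a < 4 \<Longrightarrow> x < 4 \<Longrightarrow>
   psi g h a b x < 16*k \<and> psi g h a b x div 16 = g \<and> psi g h a b x mod 16 div 4 = a"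
  using dm[of "4*a+x" 16 g] dm[of x 4 a] unfolding psi_def by (simp add: add.assoc)

lemma psi_Y: "g < h \<Longrightarrow> h < k \<Longrightarrow> b < 4 \<Longrightarrow> 4 \<le> x \<Longrightarrow> x < 8 \<Longrightarrow>
   psi g h a b x < 16*k \<and> psi g h a b x div 16 = h \<and> psi g h a b x mod 16 div 4 = b"
  using dm[of "4*b+(x-4)" 16 h] dm[of "x-4" 4 b] unfolding psi_def by (simp add: add.assoc)

lemma psi_inj: "g < h \<Longrightarrow> a < 4 \<Longrightarrow> b < 4 \<Longrightarrow> inj_on (psi g h a b) {..<8}"
  unfolding psi_def inj_on_def by auto

definition goodb :: "nat list \<Rightarrow> bool" where
  "goodb b \<longleftrightarrow> length b = 8 \<and> distinct b \<and> (\<forall>i<8. b!i < 17) \<and>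
     inj_on (fw b) {..<8} \<and> fw b ` {..<8} \<inter> bw b ` {..<8} = {} \<and>
     {0<..<17} \<subseteq> fw b ` {..<8} \<union> bw b ` {..<8}"

lemma goodb_base: "goodb base" "goodb base'"
  unfolding goodb_def using base_H base'_H by blast+

lemma trans_inj: "c < 17 \<Longrightarrow> inj_on (\<lambda>x. (x + c) mod 17) {..<(17::nat)}"
proof (rule inj_onI)
  fix x y assume "c < 17" "x \<in> {..<(17::nat)}" "y \<in> {..<(17::nat)}" "(x + c) mod 17 = (y + c) mod 17"
  then show "x = y" using uniq_aux2[of c x y] by (metis add.commute lessThan_iff)
qed

lemma set_b: "goodb b \<Longrightarrow> set b \<subseteq> {..<17}"
  unfolding goodb_def by (auto simp: in_set_conv_nth)

lemma Lc_props: assumes "goodb b" "c < 17"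
  shows "length (Lc b c) = 8" "distinct (Lc b c)" "set (Lc b c) \<subseteq> {..<17}"
proof -
  show "length (Lc b c) = 8" using assms(1) unfolding goodb_def Lc_def by simp
  have "inj_on (\<lambda>x. (x + c) mod 17) (set b)" using trans_inj[OF assms(2)] set_b[OF assms(1)] by (rule inj_on_subset)
  then show "distinct (Lc b c)" using assms(1) unfolding goodb_def Lc_def by (simp add: distinct_map)
  show "set (Lc b c) \<subseteq> {..<17}" unfolding Lc_def by auto
qed

lemma memL:
  assumes gb: "goodb b" and cc: "c < 17" and e: "e \<in> cyc_edges (map (phi k g) (Lc b c))"
  shows "\<exists>x y. x < 17 \<and> y < 17 \<and> x \<noteq> y \<and> e = {phi k g x, phi k g y} \<and> {x,y} \<in> cyc_edges (Lc b c)"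
proof -
  have len: "length b = 8" using gb unfolding goodb_def by simp
  from e obtain e0 where e0: "e0 \<in> cyc_edges (Lc b c)" "e = phi k g ` e0"
    unfolding cyc_edges_map by blast
  then obtain i where i: "i < 8" "e0 = {(b!i + c) mod 17, (b!((i+1) mod 8) + c) mod 17}"
    unfolding Lc_edge[OF len] by blast
  have ij: "(i+1) mod 8 < 8" "(i+1) mod 8 \<noteq> i" using i(1) by (simp, presburger)
  have bb: "b!i < 17" "b!((i+1) mod 8) < 17" using gb i(1) ij(1) unfolding goodb_def by auto
  have "b!i \<noteq> b!((i+1) mod 8)" using gb i(1) ij unfolding goodb_def by (simp add: nth_eq_iff_index_eq)
  then have ne: "(b!i + c) mod 17 \<noteq> (b!((i+1) mod 8) + c) mod 17"
    using uniq_aux2[of c "b!i" "b!((i+1) mod 8)"] bb cc by (metis add.commute)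
  show ?thesis
    by (rule exI[of _ "(b!i + c) mod 17"], rule exI[of _ "(b!((i+1) mod 8) + c) mod 17"])
       (use ne e0 i in auto)
qed

definition goodG :: "nat list \<Rightarrow> nat list \<Rightarrow> bool" where
  "goodG P Q \<longleftrightarrow> length P = 8 \<and> distinct P \<and> set P \<subseteq> {..<8} \<and>
     length Q = 8 \<and> distinct Q \<and> set Q = set P \<and>
     (\<forall>e\<in>cyc_edges P \<union> cyc_edges Q. \<exists>x\<in>{0,1,2,3}. \<exists>y\<in>{4,5,6,7}. e = {x,y}) \<and>
     (\<forall>x\<in>{0,1,2,3}. \<forall>y\<in>{4,5,6,7}. ({x,y} \<in> cyc_edges P) = ({x,y} \<notin> cyc_edges Q)) \<and>
     cyc_edges P \<inter> cyc_edges Q = {}"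

lemma goodG_E: "goodG P Q \<Longrightarrow> e \<in> cyc_edges P \<union> cyc_edges Q \<Longrightarrow> \<exists>x\<in>{0,1,2,3}. \<exists>y\<in>{4,5,6,7}. e = {x,y}"
  unfolding goodG_def by blast

lemma goodG_sym: "goodG P Q \<Longrightarrow> goodG Q P"
  unfolding goodG_def by blast

definition G0 :: "nat list" where "G0 = [0,4,1,5,2,6,3,7]"
definition G1 :: "nat list" where "G1 = [0,5,3,4,2,7,1,6]"

lemma goodG01: "goodG G0 G1"
  unfolding goodG_def G0_def G1_def cyc8 by (simp add: doubleton_eq_iff insert_commute)

definition Gf :: "nat list \<Rightarrow> nat list \<Rightarrow> nat \<Rightarrow> nat list" where
  "Gf P Q s = (if s = 0 then P else Q)"

lemma Gf_props: "goodG P Q \<Longrightarrow> length (Gf P Q s) = 8 \<and> distinct (Gf P Q s) \<and> set (Gf P Q s) \<subseteq> {..<8}"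
  unfolding goodG_def Gf_def by auto

lemma memR:
  assumes gG: "goodG P Q" and e: "e \<in> cyc_edges (map (psi g h a b) (Gf P Q s))"
  shows "\<exists>x y. x < 4 \<and> 4 \<le> y \<and> y < 8 \<and> e = {psi g h a b x, psi g h a b y} \<and> {x,y} \<in> cyc_edges (Gf P Q s)"
proof -
  from e obtain e0 where e0: "e0 \<in> cyc_edges (Gf P Q s)" "e = psi g h a b ` e0"
    unfolding cyc_edges_map by blast
  then have "e0 \<in> cyc_edges P \<union> cyc_edges Q" unfolding Gf_def by (cases "s = 0") simp_all
  then obtain x y where xy: "x \<in> {0,1,2,3}" "y \<in> {4,5,6,7}" "e0 = {x,y}" using goodG_E[OF gG] by blast
  have "x < 4" "4 \<le> y" "y < 8" using xy(1,2) by auto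
  then show ?thesis using e0 xy(3) by auto
qed



definition Idx :: "nat \<Rightarrow> ((nat \<times> nat) + (nat \<times> nat \<times> nat \<times> nat \<times> nat)) set" where
  "Idx k = Inl ` {(g,c). g < k \<and> c < 17} \<union> Inr ` {(g,h,a,b,s). g < h \<and> h < k \<and> a < 4 \<and> b < 4 \<and> s < 2}"

definition Fam :: "nat \<Rightarrow> nat list \<Rightarrow> nat list \<Rightarrow> nat list \<Rightarrow> ((nat \<times> nat) + (nat \<times> nat \<times> nat \<times> nat \<times> nat)) \<Rightarrow> nat set set" where
  "Fam k bs P Q i = (case i of Inl (g,c) \<Rightarrow> cyc_edges (map (phi k g) (Lc bs c))
      | Inr (g,h,a,b,s) \<Rightarrow> cyc_edges (map (psi g h a b) (Gf P Q s)))"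

lemma Fam_Inl: "Fam k bs P Q (Inl (g,c)) = cyc_edges (map (phi k g) (Lc bs c))"
  unfolding Fam_def by simp
lemma Fam_Inr: "Fam k bs P Q (Inr (g,h,a,b,s)) = cyc_edges (map (psi g h a b) (Gf P Q s))"
  unfolding Fam_def by simp

lemma Idx_cases:
  assumes "i \<in> Idx k"
  obtains g c where "i = Inl (g,c)" "g < k" "c < 17"
  | g h a b s where "i = Inr (g,h,a,b,s)" "g < h" "h < k" "a < 4" "b < 4" "s < 2"
  using assms unfolding Idx_def by blast

lemma Fam_cyc:
  assumes gb: "goodb bs" and gG: "goodG P Q" and i: "i \<in> Idx k"
  shows "is_8cycle (Fam k bs P Q i) \<and> Fam k bs P Q i \<subseteq> edges_Kn (16*k+1)"
  using i
proof (cases rule: Idx_cases)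
  case (1 g c)
  have L: "length (Lc bs c) = 8" "distinct (Lc bs c)" "set (Lc bs c) \<subseteq> {..<17}"
    using Lc_props[OF gb 1(3)] by auto
  have inj: "inj_on (phi k g) (set (Lc bs c))" using phi_inj[OF 1(2)] L(3) by (rule inj_on_subset)
  have sub: "phi k g ` set (Lc bs c) \<subseteq> {..<16*k+1}" using phi_lt[OF 1(2)] L(3) by auto
  show ?thesis unfolding 1(1) Fam_Inl
    using is_8cycle_map[OF L(1,2) inj] cyc_edges_sub_Kn[of "Lc bs c", OF _ L(2) inj sub] L(1) by simp
next
  case (2 g h a b s)
  have L: "length (Gf P Q s) = 8" "distinct (Gf P Q s)" "set (Gf P Q s) \<subseteq> {..<8}"
    using Gf_props[OF gG] by auto
  have inj: "inj_on (psi g h a b) (set (Gf P Q s))" using psi_inj[OF 2(2,4,5)] L(3) by (rule inj_on_subset)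
  have "x < 8 \<Longrightarrow> psi g h a b x < 16*k+1" for x
    using psi_X[OF 2(2,3,4), of x b] psi_Y[OF 2(2,3,5), of x a] by (cases "x < 4") auto
  then have sub: "psi g h a b ` set (Gf P Q s) \<subseteq> {..<16*k+1}" using L(3) by auto
  show ?thesis unfolding 2(1) Fam_Inr
    using is_8cycle_map[OF L(1,2) inj] cyc_edges_sub_Kn[of "Gf P Q s", OF _ L(2) inj sub] L(1) by simp
qed

lemma Fam_inside:
  assumes gb: "goodb bs" and gb': "goodb bs'" and sb: "set bs' = set bs"
    and db: "cyc_edges bs \<inter> cyc_edges bs' = {}"
    and gG: "goodG P Q" and i: "i \<in> Idx k"
  shows "inside_8cycle (Fam k bs P Q i) (Fam k bs' Q P i)"
  using i
proof (cases rule: Idx_cases)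
  case (1 g c)
  define t where "t = (\<lambda>x::nat. (x + c) mod 17)"
  have Lc: "Lc bb c = map t bb" for bb unfolding Lc_def t_def by simp
  have inj1: "inj_on t (set bs)" using trans_inj[OF 1(3)] set_b[OF gb] unfolding t_def by (rule inj_on_subset)
  have "t ` set bs \<subseteq> {..<17}" unfolding t_def by auto
  then have inj2: "inj_on (phi k g) (t ` set bs)" using phi_inj[OF 1(2)] by (rule inj_on_subset[rotated])
  have inj: "inj_on (phi k g \<circ> t) (set bs)" using inj1 inj2 by (rule comp_inj_on)
  have l: "length bs = 8" "distinct bs" "length bs' = 8" "distinct bs'"
    using gb gb' unfolding goodb_def by auto
  show ?thesis unfolding 1(1) Fam_Inl Lc map_map
    by (rule inside_map[OF l sb inj db])
next
  case (2 g h a b s)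
  have G: "length P = 8" "distinct P" "set P \<subseteq> {..<8}" "length Q = 8" "distinct Q" "set Q = set P"
    "cyc_edges P \<inter> cyc_edges Q = {}" using gG unfolding goodG_def by auto
  have inj: "inj_on (psi g h a b) (set P)" using psi_inj[OF 2(2,4,5)] G(3) by (rule inj_on_subset)
  have inj': "inj_on (psi g h a b) (set Q)" using inj G(6) by simp
  show ?thesis
  proof (cases "s = 0")
    case True
    then show ?thesis unfolding 2(1) Fam_Inr Gf_def
      using inside_map[OF G(1,2,4,5,6) inj G(7)] by simp
  next
    case False
    then show ?thesis unfolding 2(1) Fam_Inr Gf_def
      using inside_map[OF G(4,5,1,2) G(6)[symmetric] inj'] G(7) by (simp add: Int_commute)
  qed
qed



lemma decomp: "16 * (u div 16) + 4 * (u mod 16 div 4) + u mod 4 = (u::nat)"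
proof -
  have m: "u mod 16 mod 4 = u mod 4" by (simp add: mod_mod_cancel)
  have d1: "u mod 16 div 4 * 4 + u mod 16 mod 4 = u mod 16" by (rule div_mult_mod_eq)
  have d2: "u div 16 * 16 + u mod 16 = u" by (rule div_mult_mod_eq)
  show ?thesis using m d1 d2 by linarith
qed

lemma goodb_L:
  assumes "goodb b" "x < 17" "y < 17" "x \<noteq> y"
  shows "\<exists>!c. c < 17 \<and> {x,y} \<in> cyc_edges (Lc b c)"
proof -
  have H: "length b = 8 \<and> distinct b \<and> (\<forall>i<8. b!i < 17) \<and> inj_on (fw b) {..<8} \<and> fw b ` {..<8} \<inter> bw b ` {..<8} = {} \<and>
     {0<..<17} \<subseteq> fw b ` {..<8} \<union> bw b ` {..<8}"
    using assms(1) unfolding goodb_def by assumption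
  show ?thesis using H by (intro Lc_unique assms(2-4)) (elim conjE; assumption)+
qed

lemma in_map_edges: "{x,y} \<in> cyc_edges vs \<Longrightarrow> {f x, f y} \<in> cyc_edges (map f vs)"
  unfolding cyc_edges_map by (rule image_eqI[of _ _ "{x,y}"]) auto

lemma ex_ord:
  assumes gb: "goodb bs" and gG: "goodG P Q" and uv: "u < v" "v < 16*k+1"
  shows "\<exists>i\<in>Idx k. {u,v} \<in> Fam k bs P Q i"
proof (cases "v = 16*k")
  case True
  define g where "g = u div 16"
  have g: "g < k" using uv True unfolding g_def by auto
  have pu: "phi k g (u mod 16) = u" unfolding phi_def g_def by simp
  have pv: "phi k g 16 = v" unfolding phi_def using True by simp
  have "u mod 16 < 17" "(16::nat) < 17" "u mod 16 \<noteq> 16" by auto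
  then obtain c where c: "c < 17" "{u mod 16, 16} \<in> cyc_edges (Lc bs c)"
    using ex1_implies_ex[OF goodb_L[OF gb]] by blast
  have "{u,v} \<in> Fam k bs P Q (Inl (g,c))" unfolding Fam_Inl
    using in_map_edges[OF c(2), of "phi k g"] pu pv by simp
  moreover have "Inl (g,c) \<in> Idx k" unfolding Idx_def using g c by auto
  ultimately show ?thesis by blast
next
  case False
  then have v: "v < 16*k" using uv by simp
  show ?thesis
  proof (cases "u div 16 = v div 16")
    case True
    define g where "g = u div 16"
    have g: "g < k" using uv v unfolding g_def by auto
    have pu: "phi k g (u mod 16) = u" unfolding phi_def g_def by simp
    have pv: "phi k g (v mod 16) = v" unfolding phi_def g_def using True by simp
    have ne: "u mod 16 \<noteq> v mod 16" using True uv(1) by (metis div_mod_decomp less_irrefl_nat)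
    have "u mod 16 < 17" "v mod 16 < 17" by auto
    then obtain c where c: "c < 17" "{u mod 16, v mod 16} \<in> cyc_edges (Lc bs c)"
      using ex1_implies_ex[OF goodb_L[OF gb _ _ ne]] by blast
    have "{u,v} \<in> Fam k bs P Q (Inl (g,c))" unfolding Fam_Inl
      using in_map_edges[OF c(2), of "phi k g"] pu pv by simp
    moreover have "Inl (g,c) \<in> Idx k" unfolding Idx_def using g c by auto
    ultimately show ?thesis by blast
  next
    case False
    define g h a b where "g = u div 16" "h = v div 16" "a = u mod 16 div 4" "b = v mod 16 div 4"
    have gh: "g < h" "h < k" using False uv v div_le_mono[of u v 16] unfolding g_h_a_b_def
      by (auto simp: less_mult_imp_div_less)
    have ab: "a < 4" "b < 4" unfolding g_h_a_b_def by auto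
    define x y where "x = u mod 4" "y = 4 + v mod 4"
    have pu: "psi g h a b x = u" unfolding psi_def g_h_a_b_def x_y_def using decomp[of u] by simp
    have pv: "psi g h a b y = v" unfolding psi_def g_h_a_b_def x_y_def using decomp[of v] by simp
    have xy: "x \<in> {0,1,2,3}" "y \<in> {4,5,6,7}" unfolding x_y_def by auto
    have cov: "({x,y} \<in> cyc_edges P) = ({x,y} \<notin> cyc_edges Q)"
      using gG xy unfolding goodG_def by blast
    obtain s where s: "s < 2" "{x,y} \<in> cyc_edges (Gf P Q s)"
    proof (cases "{x,y} \<in> cyc_edges P")
      case True then show ?thesis using that[of 0] unfolding Gf_def by simp
    next
      case False then show ?thesis using that[of 1] cov unfolding Gf_def by simp
    qed
    have "{u,v} \<in> Fam k bs P Q (Inr (g,h,a,b,s))" unfolding Fam_Inr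
      using in_map_edges[OF s(2), of "psi g h a b"] pu pv by simp
    moreover have "Inr (g,h,a,b,s) \<in> Idx k" unfolding Idx_def using gh ab s by auto
    ultimately show ?thesis by blast
  qed
qed

lemma Fam_exist:
  assumes gb: "goodb bs" and gG: "goodG P Q" and e: "e \<in> edges_Kn (16*k+1)"
  shows "\<exists>i\<in>Idx k. e \<in> Fam k bs P Q i"
proof -
  obtain u v where uv: "u < 16*k+1" "v < 16*k+1" "u \<noteq> v" "e = {u,v}" using e unfolding edges_Kn_def by blast
  show ?thesis
  proof (cases "u < v")
    case True then show ?thesis using ex_ord[OF gb gG True uv(2)] uv(4) by simp
  next
    case False then have "v < u" using uv(3) by simp
    have "\<exists>i\<in>Idx k. {v,u} \<in> Fam k bs P Q i" by (rule ex_ord[OF gb gG \<open>v < u\<close> uv(1)])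
    then show ?thesis using uv(4) by (simp add: insert_commute)
  qed
qed



lemma ex1_eq: "\<exists>!x. P x \<Longrightarrow> P a \<Longrightarrow> P b \<Longrightarrow> a = b" by blast

lemma no_mix:
  assumes gb: "goodb bs" and gG: "goodG P Q" and g: "g < k" and c: "c < 17"
    and hh: "g' < h'" "h' < k" "a' < 4" "b' < 4"
    and e1: "e \<in> Fam k bs P Q (Inl (g,c))" and e2: "e \<in> Fam k bs P Q (Inr (g',h',a',b',s'))"
  shows False
proof -
  obtain x y where xy: "x < 17" "y < 17" "e = {phi k g x, phi k g y}"
    using memL[OF gb c e1[unfolded Fam_Inl]] by blast
  obtain x' y' where xy': "x' < 4" "4 \<le> y'" "y' < 8" "e = {psi g' h' a' b' x', psi g' h' a' b' y'}"
    using memR[OF gG e2[unfolded Fam_Inr]] by blast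
  have px: "psi g' h' a' b' x' < 16*k" "psi g' h' a' b' x' div 16 = g'" using psi_X[OF hh(1,2,3) xy'(1)] by auto
  have py: "psi g' h' a' b' y' < 16*k" "psi g' h' a' b' y' div 16 = h'" using psi_Y[OF hh(1,2,4) xy'(2,3)] by auto
  have key: "w \<in> e \<Longrightarrow> w < 16*k \<Longrightarrow> w div 16 = g" for w
  proof -
    assume "w \<in> e" "w < 16*k"
    then obtain z where z: "z < 17" "w = phi k g z" using xy by auto
    then show "w div 16 = g" using phi_cases[OF g z(1)] \<open>w < 16*k\<close> by auto
  qed
  have "g' = g" using key[OF _ px(1)] px(2) xy'(4) by auto
  moreover have "h' = g" using key[OF _ py(1)] py(2) xy'(4) by auto
  ultimately show False using hh(1) by simp
qed

lemma uniq_LL: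
  assumes gb: "goodb bs" and g: "g < k" "g' < k" and c: "c < 17" "c' < 17"
    and e1: "e \<in> Fam k bs P Q (Inl (g,c))" and e2: "e \<in> Fam k bs P Q (Inl (g',c'))"
  shows "g = g' \<and> c = c'"
proof -
  obtain x y where xy: "x < 17" "y < 17" "x \<noteq> y" "e = {phi k g x, phi k g y}" "{x,y} \<in> cyc_edges (Lc bs c)"
    using memL[OF gb c(1) e1[unfolded Fam_Inl]] by blast
  obtain x' y' where xy': "x' < 17" "y' < 17" "x' \<noteq> y'" "e = {phi k g' x', phi k g' y'}" "{x',y'} \<in> cyc_edges (Lc bs c')"
    using memL[OF gb c(2) e2[unfolded Fam_Inl]] by blast
  obtain z where z: "z \<in> {x,y}" "z < 16" using xy(1,2,3) by (cases "x < 16") auto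
  have z17: "z < 17" using z by simp
  define w where "w = phi k g z"
  have w: "w < 16*k" "w div 16 = g" using phi_cases[OF g(1) z17] z(2) unfolding w_def by auto
  have "w \<in> e" using z xy(4) unfolding w_def by auto
  then obtain z' where z': "z' < 17" "w = phi k g' z'" using xy' by auto
  have gg: "g = g'" using phi_cases[OF g(2) z'(1)] w z'(2) by auto
  have "phi k g ` {x,y} = phi k g ` {x',y'}" using xy(4) xy'(4) gg by simp
  then have "{x,y} = {x',y'}" using phi_inj[OF g(1)] xy(1,2) xy'(1,2)
    by (subst (asm) inj_on_image_eq_iff[of "phi k g" "{..<17}"]) auto
  then have "c = c'" using ex1_eq[OF goodb_L[OF gb xy(1,2,3)], of c c'] c xy(5) xy'(5) by simp
  then show ?thesis using gg by simp
qed

lemma uniq_RR: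
  assumes gG: "goodG P Q"
    and hh: "g < h" "h < k" "a < 4" "b < 4" "s < 2"
    and hh': "g' < h'" "h' < k" "a' < 4" "b' < 4" "s' < 2"
    and e1: "e \<in> Fam k bs P Q (Inr (g,h,a,b,s))" and e2: "e \<in> Fam k bs P Q (Inr (g',h',a',b',s'))"
  shows "(g,h,a,b,s) = (g',h',a',b',s')"
proof -
  obtain x y where xy: "x < 4" "4 \<le> y" "y < 8" "e = {psi g h a b x, psi g h a b y}" "{x,y} \<in> cyc_edges (Gf P Q s)"
    using memR[OF gG e1[unfolded Fam_Inr]] by blast
  obtain x' y' where xy': "x' < 4" "4 \<le> y'" "y' < 8" "e = {psi g' h' a' b' x', psi g' h' a' b' y'}" "{x',y'} \<in> cyc_edges (Gf P Q s')"
    using memR[OF gG e2[unfolded Fam_Inr]] by blast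
  note X = psi_X[OF hh(1,2,3) xy(1), of b]
  note Y = psi_Y[OF hh(1,2,4) xy(2,3), of a]
  note X' = psi_X[OF hh'(1,2,3) xy'(1), of b']
  note Y' = psi_Y[OF hh'(1,2,4) xy'(2,3), of a']
  have "(psi g h a b x = psi g' h' a' b' x' \<and> psi g h a b y = psi g' h' a' b' y') \<or>
        (psi g h a b x = psi g' h' a' b' y' \<and> psi g h a b y = psi g' h' a' b' x')"
    using xy(4) xy'(4) by (metis doubleton_eq_iff)
  then have eq: "g = g' \<and> h = h' \<and> a = a' \<and> b = b'"
  proof
    assume "psi g h a b x = psi g' h' a' b' x' \<and> psi g h a b y = psi g' h' a' b' y'"
    then show ?thesis using X Y X' Y' by metis
  next
    assume "psi g h a b x = psi g' h' a' b' y' \<and> psi g h a b y = psi g' h' a' b' x'"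
    then have "g = h'" "h = g'" using X Y X' Y' by metis+
    then show ?thesis using hh(1) hh'(1) by simp
  qed
  have "psi g h a b ` {x,y} = psi g h a b ` {x',y'}" using xy(4) xy'(4) eq by simp
  then have xyeq: "{x,y} = {x',y'}" using psi_inj[OF hh(1,3,4)] xy(1,3) xy'(1,3)
    by (subst (asm) inj_on_image_eq_iff[of "psi g h a b" "{..<8}"]) auto
  have disj: "cyc_edges P \<inter> cyc_edges Q = {}" using gG unfolding goodG_def by blast
  have "s = s'"
  proof (rule ccontr)
    assume "s \<noteq> s'"
    then have "(s = 0 \<and> s' = 1) \<or> (s = 1 \<and> s' = 0)" using hh(5) hh'(5) by auto
    then show False using xy(5) xy'(5) xyeq disj unfolding Gf_def by auto
  qed
  then show ?thesis using eq by simp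
qed



lemma Fam_unique:
  assumes gb: "goodb bs" and gG: "goodG P Q" and i: "i \<in> Idx k" and j: "j \<in> Idx k"
    and e1: "e \<in> Fam k bs P Q i" and e2: "e \<in> Fam k bs P Q j"
  shows "i = j"
  using i
proof (cases rule: Idx_cases)
  case (1 g c)
  show ?thesis using j
  proof (cases rule: Idx_cases)
    case (1 g' c')
    then show ?thesis using uniq_LL[OF gb] \<open>i = Inl (g,c)\<close> \<open>g < k\<close> \<open>c < 17\<close> e1 e2 by blast
  next
    case (2 g' h' a' b' s')
    then show ?thesis using no_mix[OF gb gG] \<open>i = Inl (g,c)\<close> \<open>g < k\<close> \<open>c < 17\<close> e1 e2 by blast
  qed
next
  case (2 g h a b s)
  show ?thesis using j
  proof (cases rule: Idx_cases)
    case (1 g' c')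
    then show ?thesis using no_mix[OF gb gG] \<open>i = Inr (g,h,a,b,s)\<close> 2 e1 e2 by blast
  next
    case (2 g' h' a' b' s')
    then have "(g,h,a,b,s) = (g',h',a',b',s')"
      using uniq_RR[OF gG] \<open>i = Inr (g,h,a,b,s)\<close> \<open>g < h\<close> \<open>h < k\<close> \<open>a < 4\<close> \<open>b < 4\<close> \<open>s < 2\<close> e1 e2 by blast
    then show ?thesis using 2 \<open>i = Inr (g,h,a,b,s)\<close> by simp
  qed
qed

lemma Fam_ex1:
  assumes gb: "goodb bs" and gG: "goodG P Q"
  shows "\<forall>e\<in>edges_Kn (16*k+1). \<exists>!i. i \<in> Idx k \<and> e \<in> Fam k bs P Q i"
proof
  fix e assume e: "e \<in> edges_Kn (16*k+1)"
  show "\<exists>!i. i \<in> Idx k \<and> e \<in> Fam k bs P Q i"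
  proof (rule ex_ex1I)
    show "\<exists>i. i \<in> Idx k \<and> e \<in> Fam k bs P Q i" using Fam_exist[OF gb gG e] by blast
  next
    fix i j assume "i \<in> Idx k \<and> e \<in> Fam k bs P Q i" "j \<in> Idx k \<and> e \<in> Fam k bs P Q j"
    then show "i = j" using Fam_unique[OF gb gG] by blast
  qed
qed

theorem lemma3p1:
  fixes n :: nat
  assumes "n mod 16 = 1" and "n \<ge> 17"
  shows "\<exists>\<C>. is_8cycle_system n \<C> \<and> almost_2perfect n \<C>"
proof -
  define k where "k = n div 16"
  have n: "n = 16*k+1" using assms(1) unfolding k_def by (metis div_mult_mod_eq mult.commute)
  have gb: "goodb base" "goodb base'" by (rule goodb_base)+
  have gG: "goodG G0 G1" "goodG G1 G0" using goodG01 goodG_sym by blast+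
  have "\<exists>\<C>. is_8cycle_system (16*k+1) \<C> \<and> almost_2perfect (16*k+1) \<C>"
  proof (rule framework[of "Idx k" "Fam k base G0 G1" "Fam k base' G1 G0"])
    show "\<forall>i\<in>Idx k. is_8cycle (Fam k base G0 G1 i) \<and> inside_8cycle (Fam k base G0 G1 i) (Fam k base' G1 G0 i)"
      using Fam_cyc[OF gb(1) gG(1)] Fam_inside[OF gb(1,2) base_inside gG(1)] by blast
    show "\<forall>i\<in>Idx k. Fam k base G0 G1 i \<subseteq> edges_Kn (16*k+1)"
      using Fam_cyc[OF gb(1) gG(1)] by blast
    show "\<forall>i\<in>Idx k. Fam k base' G1 G0 i \<subseteq> edges_Kn (16*k+1)"
      using Fam_cyc[OF gb(2) gG(2)] by blast
    show "\<forall>e\<in>edges_Kn (16*k+1). \<exists>!i. i \<in> Idx k \<and> e \<in> Fam k base G0 G1 i"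
      by (rule Fam_ex1[OF gb(1) gG(1)])
    show "\<forall>e\<in>edges_Kn (16*k+1). \<exists>!i. i \<in> Idx k \<and> e \<in> Fam k base' G1 G0 i"
      by (rule Fam_ex1[OF gb(2) gG(2)])
  qed
  then show ?thesis using n by simp
qed


end
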